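(* Let $0<a<b$ be real numbers and let $f:(a,b)\to\mathbb{R}$ be real analytic and not identically zero. Assume that: (1) both as $x\to a$ and as $x\to b$ we have $\kappa(f,x)\to\infty$; (2) both as $x\to a$ and as $x\to b$ we have $\limsup |H(f,x)|\leq C$ for some constant $C>0$, where \[H(f,x)=\frac{x^2f(x)f''(x)}{f(x)^2+x^2f'(x)^2}.\] Moreover, the part of hypothesis (2) concerning $x\to a$ (resp. $x\to b$) is automatically satisfied if $f$ admits an analytic extension to $(a-\epsilon,b)$ (resp. $(a,b+\epsilon)$) for some $\epsilon>0$. Then $f$ is amenable.
   Context: Relative distance on $\mathbb{R}$: $\mathrm{dist}(x,y)=0$ if $x=y=0$, $\mathrm{dist}(x,y)=|\log(y/x)|$ if $xy>0$, and $\mathrm{dist}(x,y)=\infty$ otherwise. For a real analytic function $f$ on an open set $\Omega\subseteq\mathbb{R}$ (a union of open intervals), not identically zero, the condition number is $\kappa(f,x)=0$ if $x=0$, $\kappa(f,x)=\infty$ if $x\neq0$ and $f(x)=0$, and $\kappa(f,x)=|x|\,|f'(x)|/|f(x)|$ otherwise; set $\mu(f,x)=1+\kappa(f,x)$. The function $f:\Omega\to\mathbb{R}$ is called amenable if there is a constant $C>0$ such that for every $x\in\Omega$ with $\kappa(f,x)<\infty$, the set $B_x=\{y\in\mathbb{R}:\mathrm{dist}(y,x)<1/(C\mu(f,x))\}$ is contained in $\Omega$, and $\mu(f,y)\leq C\mu(f,x)$ for all $y\in B_x$. *)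

theory Defs
  imports "HOL-Analysis.Analysis" "HOL-Library.Extended_Real" "HOL-Library.Liminf_Limsup"
begin

definition real_analytic_on :: "(real \<Rightarrow> real) \<Rightarrow> real set \<Rightarrow> bool" where
  "real_analytic_on f S \<longleftrightarrow>
     (\<forall>x\<in>S. \<exists>r>0. \<exists>c :: nat \<Rightarrow> real.
        \<forall>y. \<bar>y - x\<bar> < r \<longrightarrow> (\<lambda>n. c n * (y - x) ^ n) sums f y)"

definition rdist :: "real \<Rightarrow> real \<Rightarrow> ereal" where
  "rdist x y = (if x = 0 \<and> y = 0 then 0
                else if x * y > 0 then ereal \<bar>ln (y / x)\<bar>
                else \<infinity>)"

definition kappa :: "(real \<Rightarrow> real) \<Rightarrow> real \<Rightarrow> ereal" where
  "kappa f x = (if x = 0 then 0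
                else if f x = 0 then \<infinity>
                else ereal (\<bar>x\<bar> * \<bar>deriv f x\<bar> / \<bar>f x\<bar>))"

definition mu :: "(real \<Rightarrow> real) \<Rightarrow> real \<Rightarrow> ereal" where
  "mu f x = 1 + kappa f x"

definition amenable :: "(real \<Rightarrow> real) \<Rightarrow> real set \<Rightarrow> bool" where
  "amenable f \<Omega> \<longleftrightarrow>
     (\<exists>C>0. \<forall>x\<in>\<Omega>. kappa f x < \<infinity> \<longrightarrow>
        (let B = {y. rdist y x < ereal (1 / (C * real_of_ereal (mu f x)))} in
           B \<subseteq> \<Omega> \<and> (\<forall>y\<in>B. mu f y \<le> ereal C * mu f x)))"

definition Hq :: "(real \<Rightarrow> real) \<Rightarrow> real \<Rightarrow> real" where
  "Hq f x = x\<^sup>2 * f x * deriv (deriv f) x / ((f x)\<^sup>2 + x\<^sup>2 * (deriv f x)\<^sup>2)"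

end

theory Submission
  imports Defs
begin


lemma deriv_bound_lemma:
  fixes W W' :: "real \<Rightarrow> real"
  assumes "t0 \<le> t1"
    and "\<And>t. t0 \<le> t \<Longrightarrow> t \<le> t1 \<Longrightarrow> (W has_real_derivative W' t) (at t) \<and> \<bar>W' t\<bar> \<le> L"
  shows "\<bar>W t1 - W t0\<bar> \<le> L * (t1 - t0)"
proof -
  have 1: "(\<lambda>t. L * t - W t) t0 \<le> (\<lambda>t. L * t - W t) t1"
  proof (rule DERIV_nonneg_imp_nondecreasing[OF assms(1)])
    fix t assume "t0 \<le> t" "t \<le> t1"
    with assms(2) have "(W has_real_derivative W' t) (at t)" "\<bar>W' t\<bar> \<le> L" by auto
    then show "\<exists>y. ((\<lambda>t. L * t - W t) has_real_derivative y) (at t) \<and> 0 \<le> y"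
      by (intro exI[of _ "L - W' t"]) (auto intro!: derivative_eq_intros)
  qed
  have 2: "(\<lambda>t. L * t + W t) t0 \<le> (\<lambda>t. L * t + W t) t1"
  proof (rule DERIV_nonneg_imp_nondecreasing[OF assms(1)])
    fix t assume "t0 \<le> t" "t \<le> t1"
    with assms(2) have "(W has_real_derivative W' t) (at t)" "\<bar>W' t\<bar> \<le> L" by auto
    then show "\<exists>y. ((\<lambda>t. L * t + W t) has_real_derivative y) (at t) \<and> 0 \<le> y"
      by (intro exI[of _ "L + W' t"]) (auto intro!: derivative_eq_intros)
  qed
  from 1 2 show ?thesis by (simp add: algebra_simps abs_le_iff)
qed

definition Wf :: "(real \<Rightarrow> real) \<Rightarrow> (real \<Rightarrow> real) \<Rightarrow> real \<Rightarrow> real" where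
  "Wf ph ps t = sqrt ((ph t)\<^sup>2 / ((ph t)\<^sup>2 + (ps t)\<^sup>2))"

lemma W_deriv:
  fixes ph ps ch :: "real \<Rightarrow> real"
  assumes d1: "(ph has_real_derivative ps t) (at t)"
    and d2: "(ps has_real_derivative ch t) (at t)"
    and hb: "\<bar>ph t * ch t\<bar> \<le> L * ((ph t)\<^sup>2 + (ps t)\<^sup>2)"
    and nz: "ph t \<noteq> 0" and L: "0 \<le> L"
  shows "\<exists>D. (Wf ph ps has_real_derivative D) (at t) \<and> \<bar>D\<bar> \<le> 1 + L"
proof -
  define p where "p = ph t" 
  define s where "s = ps t"
  define c where "c = ch t"
  define P where "P = p\<^sup>2 + s\<^sup>2"
  have Ppos: "P > 0" using nz by (simp add: P_def p_def add_pos_nonneg)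
  have qpos: "p\<^sup>2 / P > 0" using nz Ppos by (simp add: p_def)
  define q' where "q' = (2 * p * s * P - p\<^sup>2 * (2 * p * s + 2 * s * c)) / P\<^sup>2"
  define D where "D = q' * (inverse (sqrt (p\<^sup>2 / P)) / 2)"
  have "(Wf ph ps has_real_derivative D) (at t)"
    unfolding Wf_def D_def q'_def
    using Ppos qpos
    by (auto intro!: derivative_eq_intros d1 d2 simp: p_def s_def c_def P_def power2_eq_square)
       (simp_all add: algebra_simps)
  moreover have "\<bar>D\<bar> \<le> 1 + L"
  proof -
    define r where "r = sqrt P"
    have r: "r > 0" "r\<^sup>2 = P" using Ppos by (auto simp: r_def)
    have sq: "sqrt (p\<^sup>2 / P) = \<bar>p\<bar> / r" by (simp add: r_def real_sqrt_divide)
    have sr: "\<bar>s\<bar> \<le> r" 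
      using r by (metis P_def abs_le_square_iff abs_of_pos le_add_same_cancel2 zero_le_power2)
    have q'e: "q' = 2 * p * s * (s\<^sup>2 - p * c) / P\<^sup>2"
      unfolding q'_def P_def by (simp add: algebra_simps power2_eq_square)
    have De: "D = s * (s\<^sup>2 - p * c) * r / P\<^sup>2 * sgn p"
      unfolding D_def q'e sq using nz r
      by (auto simp: p_def field_simps sgn_if)
    have "\<bar>s\<^sup>2 - p * c\<bar> \<le> (1 + L) * P"
      using hb by (simp add: p_def s_def c_def P_def abs_le_iff algebra_simps) 
          (smt (verit) zero_le_power2 mult_nonneg_nonneg L)
    hence "\<bar>s * (s\<^sup>2 - p * c)\<bar> \<le> r * ((1 + L) * P)"
      unfolding abs_mult using r(1) by (intro mult_mono sr) auto
    hence "\<bar>s * (s\<^sup>2 - p * c) * r\<bar> \<le> (1 + L) * P\<^sup>2"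
      using r by (simp add: abs_mult) (smt (verit) mult_right_mono power2_eq_square mult.commute mult.assoc)
    moreover have "p \<noteq> 0" using nz by (simp add: p_def)
    ultimately show ?thesis unfolding De using Ppos
      by (auto simp: abs_mult sgn_if divide_le_eq)
  qed
  ultimately show ?thesis by blast
qed

lemma AL:
  fixes ph ps ch :: "real \<Rightarrow> real"
  assumes t01: "t0 \<le> t1" and L: "0 \<le> L"
    and d1: "\<And>t. t0 \<le> t \<Longrightarrow> t \<le> t1 \<Longrightarrow> (ph has_real_derivative ps t) (at t)"
    and d2: "\<And>t. t0 \<le> t \<Longrightarrow> t \<le> t1 \<Longrightarrow> (ps has_real_derivative ch t) (at t)"
    and hb: "\<And>t. t0 \<le> t \<Longrightarrow> t \<le> t1 \<Longrightarrow> ph t \<noteq> 0 \<Longrightarrow> \<bar>ph t * ch t\<bar> \<le> L * ((ph t)\<^sup>2 + (ps t)\<^sup>2)"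
    and nz: "ph t0 \<noteq> 0"
    and sm: "(t1 - t0) * (1 + L) < Wf ph ps t0 / 2"
  shows "ph t1 \<noteq> 0 \<and> Wf ph ps t0 / 2 \<le> Wf ph ps t1"
proof -
  let ?W = "Wf ph ps"
  have step: "?W t0 / 2 < ?W t" if "t0 \<le> t" "t \<le> t1" "\<forall>u. t0 \<le> u \<and> u \<le> t \<longrightarrow> ph u \<noteq> 0" for t
  proof -
    have ex: "\<exists>D. (?W has_real_derivative D) (at u) \<and> \<bar>D\<bar> \<le> 1 + L" if "t0 \<le> u" "u \<le> t" for u
      using that \<open>t \<le> t1\<close> \<open>\<forall>u. t0 \<le> u \<and> u \<le> t \<longrightarrow> ph u \<noteq> 0\<close>
      by (intro W_deriv[OF d1 d2 hb _ L]) auto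
    have "\<forall>u. \<exists>D. t0 \<le> u \<and> u \<le> t \<longrightarrow> (?W has_real_derivative D) (at u) \<and> \<bar>D\<bar> \<le> 1 + L"
      using ex by metis
    then obtain D where D: "\<And>u. t0 \<le> u \<Longrightarrow> u \<le> t \<Longrightarrow> (?W has_real_derivative D u) (at u) \<and> \<bar>D u\<bar> \<le> 1 + L"
      by metis
    have "\<bar>?W t - ?W t0\<bar> \<le> (1 + L) * (t - t0)"
      by (rule deriv_bound_lemma[OF that(1)]) (use D in auto)
    moreover have "(1 + L) * (t - t0) \<le> (1 + L) * (t1 - t0)" using L that by (intro mult_left_mono) auto
    ultimately show ?thesis using sm by (auto simp: abs_le_iff mult.commute)
  qed
  have W0: "?W t0 > 0" using nz by (simp add: Wf_def add_pos_nonneg)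
  have cont: "\<And>t. t0 \<le> t \<Longrightarrow> t \<le> t1 \<Longrightarrow> isCont ph t" using d1 DERIV_isCont by blast
  have nzall: "\<forall>u. t0 \<le> u \<and> u \<le> t1 \<longrightarrow> ph u \<noteq> 0"
  proof (rule ccontr)
    assume neg: "\<not> (\<forall>u. t0 \<le> u \<and> u \<le> t1 \<longrightarrow> ph u \<noteq> 0)"
    define Z where "Z = {u \<in> {t0..t1}. ph u = 0}"
    have Zne: "Z \<noteq> {}" using neg by (auto simp: Z_def)
    have "closed Z" unfolding Z_def
      by (rule continuous_closed_preimage_constant) (auto intro!: continuous_at_imp_continuous_on cont)
    moreover have "bdd_below Z" by (auto simp: Z_def bdd_below_def)
    ultimately have sZ: "Inf Z \<in> Z" using Zne closed_contains_Inf by blast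
    define s where "s = Inf Z"
    have s: "t0 \<le> s" "s \<le> t1" "ph s = 0" using sZ by (auto simp: s_def Z_def)
    have before: "ph u \<noteq> 0" if "t0 \<le> u" "u < s" for u
    proof
      assume "ph u = 0"
      then have "u \<in> Z" using that s by (auto simp: Z_def)
      then have "s \<le> u" unfolding s_def using \<open>bdd_below Z\<close> by (rule cInf_lower)
      then show False using that by auto
    qed
    have ts: "t0 < s" using nz s by (cases "t0 = s") auto
    define c where "c = ?W t0 / 2"
    have c: "c > 0" using W0 by (simp add: c_def)
    have Wge: "c < ?W u" if "t0 \<le> u" "u < s" for u
      unfolding c_def using step[of u] that before s by auto
    have ratio: "\<bar>ps u\<bar> \<le> \<bar>ph u\<bar> / c" if "t0 \<le> u" "u < s" for u
    proof -
      have pz: "ph u \<noteq> 0" using before that by auto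
      have P: "(ph u)\<^sup>2 + (ps u)\<^sup>2 > 0" using pz by (simp add: add_pos_nonneg)
      have "c < sqrt ((ph u)\<^sup>2 / ((ph u)\<^sup>2 + (ps u)\<^sup>2))" using Wge[OF that] by (simp add: Wf_def)
      then have "sqrt (c\<^sup>2) < sqrt ((ph u)\<^sup>2 / ((ph u)\<^sup>2 + (ps u)\<^sup>2))" using c by simp
      then have "c\<^sup>2 < (ph u)\<^sup>2 / ((ph u)\<^sup>2 + (ps u)\<^sup>2)" by (simp only: real_sqrt_less_iff)
      then have "c\<^sup>2 * ((ph u)\<^sup>2 + (ps u)\<^sup>2) < (ph u)\<^sup>2" using P by (simp add: less_divide_eq)
      then have "(c * ps u)\<^sup>2 < (ph u)\<^sup>2" using c
        by (simp add: power_mult_distrib algebra_simps) (smt (verit) zero_le_power2 mult_nonneg_nonneg)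
      then have "c * \<bar>ps u\<bar> < \<bar>ph u\<bar>" using c
        by (metis abs_mult abs_of_pos power2_abs abs_ge_zero power_less_imp_less_base)
      then show ?thesis using c by (simp add: le_divide_eq mult.commute)
    qed
    define m where "m = ln ((ph t0)\<^sup>2) - 2 / c * (t1 - t0)"
    have lb: "exp m \<le> (ph u)\<^sup>2" if "t0 \<le> u" "u < s" for u
    proof -
      have "\<bar>ln ((ph u)\<^sup>2) - ln ((ph t0)\<^sup>2)\<bar> \<le> 2 / c * (u - t0)"
      proof (rule deriv_bound_lemma[OF that(1), where W' = "\<lambda>t. 2 * ps t / ph t"])
        fix t assume t: "t0 \<le> t" "t \<le> u"
        have pz: "ph t \<noteq> 0" using before t that by auto
        have "((\<lambda>t. ln ((ph t)\<^sup>2)) has_real_derivative (2 * ph t * ps t) / (ph t)\<^sup>2) (at t)"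
          using pz t that s by (auto intro!: derivative_eq_intros d1 simp: power2_eq_square zero_less_mult_iff)
        moreover have "(2 * ph t * ps t) / (ph t)\<^sup>2 = 2 * ps t / ph t" using pz by (simp add: power2_eq_square)
        moreover have "\<bar>2 * ps t / ph t\<bar> \<le> 2 / c"
          using ratio[of t] t that pz c by (auto simp: abs_divide divide_le_eq field_simps)
        ultimately show "((\<lambda>t. ln ((ph t)\<^sup>2)) has_real_derivative 2 * ps t / ph t) (at t) \<and> \<bar>2 * ps t / ph t\<bar> \<le> 2 / c"
          by simp
      qed
      moreover have "2 / c * (u - t0) \<le> 2 / c * (t1 - t0)" using c that s by (intro mult_left_mono) auto
      ultimately have "m \<le> ln ((ph u)\<^sup>2)" unfolding m_def by (auto simp: abs_le_iff)
      moreover have "(ph u)\<^sup>2 > 0" using before that by auto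
      ultimately show ?thesis by (metis exp_le_cancel_iff exp_ln)
    qed
    have "isCont (\<lambda>t. (ph t)\<^sup>2) s" using cont s by (auto intro!: continuous_intros)
    then have lim: "(\<lambda>t. (ph t)\<^sup>2) \<midarrow>s\<rightarrow> 0" using s unfolding isCont_def by simp
    obtain d where d: "d > 0" "\<And>t. t \<noteq> s \<Longrightarrow> norm (t - s) < d \<Longrightarrow> norm ((ph t)\<^sup>2 - 0) < exp m"
      using LIM_D[OF lim, of "exp m"] by auto
    define u where "u = max t0 (s - d / 2)"
    have u: "t0 \<le> u" "u < s" "u \<noteq> s" "norm (u - s) < d" using ts d by (auto simp: u_def)
    show False using d(2)[OF u(3,4)] lb[OF u(1,2)] by simp
  qed
  then show ?thesis using step[of t1] t01 by auto
qed



definition pser :: "(nat \<Rightarrow> real) \<Rightarrow> real \<Rightarrow> real" where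
  "pser c h = (\<Sum>n. c n * h ^ n)"

definition pconv :: "(nat \<Rightarrow> real) \<Rightarrow> real \<Rightarrow> bool" where
  "pconv c r \<longleftrightarrow> (\<forall>h. \<bar>h\<bar> < r \<longrightarrow> summable (\<lambda>n. c n * h ^ n))"

lemma pser_deriv:
  assumes "pconv c r" "\<bar>h\<bar> < r"
  shows "(pser c has_real_derivative pser (diffs c) h) (at h)"
  using termdiffs_strong'[of r c h] assms unfolding pconv_def pser_def by auto

lemma pconv_diffs: "pconv c r \<Longrightarrow> pconv (diffs c) r"
  unfolding pconv_def by (auto intro: termdiff_converges)

lemma pser_shift_deriv:
  assumes "pconv c r" "\<bar>y - x\<bar> < r"
  shows "((\<lambda>y. pser c (y - x)) has_real_derivative pser (diffs c) (y - x)) (at y)"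
proof -
  have "((\<lambda>y. y - x) has_real_derivative 1) (at y)" by (auto intro!: derivative_eq_intros)
  from DERIV_chain2[where g = "\<lambda>y. y - x" and x = y, OF pser_deriv[OF assms] this] show ?thesis by simp
qed

lemma pser_shift_cont:
  assumes "pconv c r" "\<bar>y - x\<bar> < r"
  shows "isCont (\<lambda>y. pser c (y - x)) y"
  using pser_shift_deriv[OF assms] by (rule DERIV_isCont)

lemma pconv_shift: "pconv c r \<Longrightarrow> pconv (\<lambda>n. c (n + k)) r"
  unfolding pconv_def
proof (intro allI impI)
  fix h :: real assume A: "\<forall>h. \<bar>h\<bar> < r \<longrightarrow> summable (\<lambda>n. c n * h ^ n)" and h: "\<bar>h\<bar> < r"
  show "summable (\<lambda>n. c (n + k) * h ^ n)"
  proof (cases "h = 0")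
    case True then show ?thesis by (simp add: summable_0_powser)
  next
    case False
    have "summable (\<lambda>n. c (n + k) * h ^ (n + k))" using A h by (subst summable_iff_shift[of "\<lambda>n. c n * h ^ n"]) auto
    then have "summable (\<lambda>n. c (n + k) * h ^ (n + k) / h ^ k)" by (rule summable_divide)
    then show ?thesis using False by (simp add: power_add)
  qed
qed

lemma pser_factor:
  assumes "pconv c r" "\<bar>h\<bar> < r" "\<And>i. i < k \<Longrightarrow> c i = 0"
  shows "pser c h = h ^ k * pser (\<lambda>n. c (n + k)) h"
proof -
  have s: "summable (\<lambda>n. c n * h ^ n)" using assms unfolding pconv_def by auto
  have s2: "summable (\<lambda>n. c (n + k) * h ^ n)" using pconv_shift[OF assms(1)] assms(2) unfolding pconv_def by auto
  have "pser c h = (\<Sum>n. c (n + k) * h ^ (n + k)) + (\<Sum>i<k. c i * h ^ i)"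
    unfolding pser_def using suminf_split_initial_segment[OF s, of k] by simp
  also have "(\<Sum>i<k. c i * h ^ i) = 0" using assms(3) by simp
  also have "(\<Sum>n. c (n + k) * h ^ (n + k)) = (\<Sum>n. h ^ k * (c (n + k) * h ^ n))"
    by (simp add: power_add algebra_simps)
  also have "\<dots> = h ^ k * (\<Sum>n. c (n + k) * h ^ n)" using s2 by (rule suminf_mult)
  finally show ?thesis by (simp add: pser_def)
qed

lemma an_local:
  assumes "real_analytic_on f J" "x \<in> J"
  obtains r c where "r > 0" "pconv c r" "\<And>y. \<bar>y - x\<bar> < r \<Longrightarrow> f y = pser c (y - x)"
proof -
  obtain r c where r: "r > 0" "\<And>y. \<bar>y - x\<bar> < r \<Longrightarrow> (\<lambda>n. c n * (y - x) ^ n) sums f y"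
    using assms unfolding real_analytic_on_def by blast
  have "pconv c r" unfolding pconv_def
  proof (intro allI impI)
    fix h :: real assume "\<bar>h\<bar> < r"
    then show "summable (\<lambda>n. c n * h ^ n)" using r(2)[of "x + h"] by (auto simp: sums_iff)
  qed
  moreover have "\<And>y. \<bar>y - x\<bar> < r \<Longrightarrow> f y = pser c (y - x)"
    using r(2) unfolding pser_def by (metis sums_unique)
  ultimately show ?thesis using that r(1) by blast
qed

lemma REG:
  assumes "real_analytic_on f J" "x \<in> J"
  shows "(f has_real_derivative deriv f x) (at x) \<and> (deriv f has_real_derivative deriv (deriv f) x) (at x)"
proof -
  obtain r c where r: "r > 0" "pconv c r" "\<And>y. \<bar>y - x\<bar> < r \<Longrightarrow> f y = pser c (y - x)"
    using an_local[OF assms] by blast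
  have d1: "(f has_real_derivative pser (diffs c) (y - x)) (at y)" if "\<bar>y - x\<bar> < r" for y
  proof (rule has_field_derivative_transform_within_open[OF pser_shift_deriv[OF r(2) that], where S = "ball x r"])
    show "open (ball x r)" by simp
    show "y \<in> ball x r" using that by (simp add: dist_real_def abs_minus_commute)
    show "\<And>z. z \<in> ball x r \<Longrightarrow> pser c (z - x) = f z" using r(3) by (simp add: dist_real_def abs_minus_commute)
  qed
  have df: "deriv f y = pser (diffs c) (y - x)" if "\<bar>y - x\<bar> < r" for y
    using d1[OF that] by (rule DERIV_imp_deriv)
  have d2: "(deriv f has_real_derivative pser (diffs (diffs c)) (x - x)) (at x)"
  proof (rule has_field_derivative_transform_within_open[OF pser_shift_deriv[OF pconv_diffs[OF r(2)]], where S = "ball x r"])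
    show "\<bar>x - x\<bar> < r" using r by simp
    show "open (ball x r)" by simp
    show "x \<in> ball x r" using r by simp
    show "\<And>z. z \<in> ball x r \<Longrightarrow> pser (diffs c) (z - x) = deriv f z" using df by (simp add: dist_real_def abs_minus_commute)
  qed
  show ?thesis using d1[of x] r(1) d2 by (simp add: DERIV_imp_deriv DERIV_deriv_iff_has_field_derivative)
qed

lemma FACT:
  assumes "pconv c r" "r > 0" "c k \<noteq> 0" "\<And>i. i < k \<Longrightarrow> c i = 0"
  shows "\<exists>e>0. e \<le> r \<and> (\<forall>h. \<bar>h\<bar> < e \<longrightarrow> h \<noteq> 0 \<longrightarrow> pser c h \<noteq> 0)"
proof -
  let ?g = "pser (\<lambda>n. c (n + k))"
  have "isCont ?g 0" using pser_shift_cont[OF pconv_shift[OF assms(1)], of 0 0] assms(2) by simp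
  moreover have "?g 0 = c k" by (simp add: pser_def)
  ultimately have "?g \<midarrow>0\<rightarrow> c k" by (simp add: isCont_def)
  then obtain d where d: "d > 0" "\<And>h. h \<noteq> 0 \<Longrightarrow> norm (h - 0) < d \<Longrightarrow> norm (?g h - c k) < \<bar>c k\<bar>"
    using LIM_D[of ?g "c k" 0 "\<bar>c k\<bar>"] assms(3) by auto
  show ?thesis
  proof (intro exI[of _ "min d r"] conjI allI impI)
    fix h assume h: "\<bar>h\<bar> < min d r" "h \<noteq> 0"
    have "?g h \<noteq> 0" using d(2)[of h] h by auto
    then show "pser c h \<noteq> 0" using pser_factor[OF assms(1), of h k] h assms(4) by auto
  qed (use d assms in auto)
qed

lemma ID:
  assumes an: "real_analytic_on f {al<..<be}" and nz: "\<exists>x0\<in>{al<..<be}. f x0 \<noteq> 0"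
    and x: "x \<in> {al<..<be}"
  shows "\<not> (\<exists>e>0. \<forall>y. \<bar>y - x\<bar> < e \<longrightarrow> f y = 0)"
proof -
  define J where "J = {al<..<be}"
  define Z where "Z = {x \<in> J. \<exists>e>0. \<forall>y. \<bar>y - x\<bar> < e \<longrightarrow> f y = 0}"
  have oJ: "open J" by (simp add: J_def)
  have oZ: "open Z" unfolding open_dist
  proof (intro ballI)
    fix z assume "z \<in> Z"
    then obtain e where e: "e > 0" "\<And>y. \<bar>y - z\<bar> < e \<Longrightarrow> f y = 0" "z \<in> J" by (auto simp: Z_def)
    obtain d where d: "d > 0" "ball z d \<subseteq> J" using openE[OF oJ \<open>z \<in> J\<close>] by blast
    show "\<exists>e>0. \<forall>y. dist y z < e \<longrightarrow> y \<in> Z"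
    proof (intro exI[of _ "min d e"] conjI allI impI)
      fix y assume y: "dist y z < min d e"
      have "y \<in> J" using y d by (auto simp: dist_commute subset_iff)
      moreover have "\<forall>w. \<bar>w - y\<bar> < e - \<bar>y - z\<bar> \<longrightarrow> f w = 0" using e y by (auto simp: dist_real_def)
      moreover have "e - \<bar>y - z\<bar> > 0" using y by (auto simp: dist_real_def)
      ultimately show "y \<in> Z" unfolding Z_def by blast
    qed (use d e in auto)
  qed
  have oV: "open (J - Z)" unfolding open_dist
  proof (intro ballI)
    fix z assume z: "z \<in> J - Z"
    obtain r c where r: "r > 0" "pconv c r" "\<And>y. \<bar>y - z\<bar> < r \<Longrightarrow> f y = pser c (y - z)"
      using an_local[OF an, of z] z by (auto simp: J_def)
    have "\<exists>n. c n \<noteq> 0"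
    proof (rule ccontr)
      assume "\<not> (\<exists>n. c n \<noteq> 0)"
      then have c0: "c = (\<lambda>n. 0)" by auto
      have "\<forall>y. \<bar>y - z\<bar> < r \<longrightarrow> f y = 0"
      proof (intro allI impI)
        fix y assume "\<bar>y - z\<bar> < r"
        then have "f y = pser c (y - z)" by (rule r(3))
        then show "f y = 0" by (simp add: c0 pser_def)
      qed
      then have "z \<in> Z" unfolding Z_def using z r(1) by blast
      then show False using z by blast
    qed
    define k where "k = (LEAST n. c n \<noteq> 0)"
    have ck: "c k \<noteq> 0" unfolding k_def by (rule LeastI_ex[OF \<open>\<exists>n. c n \<noteq> 0\<close>])
    have cl: "c i = 0" if "i < k" for i
      using not_less_Least[of i "\<lambda>n. c n \<noteq> 0"] that unfolding k_def by blast
    obtain e where e: "e > 0" "e \<le> r" "\<And>h. \<bar>h\<bar> < e \<Longrightarrow> h \<noteq> 0 \<Longrightarrow> pser c h \<noteq> 0"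
      using FACT[OF r(2) r(1) ck cl] by blast
    obtain d where d: "d > 0" "ball z d \<subseteq> J" using openE[OF oJ, of z] z by blast
    show "\<exists>e>0. \<forall>y. dist y z < e \<longrightarrow> y \<in> J - Z"
    proof (intro exI[of _ "min d e"] conjI allI impI)
      fix y assume y: "dist y z < min d e"
      have "y \<in> ball z d" using y by (simp add: dist_commute)
      then have "y \<in> J" using d(2) by blast
      moreover have "y \<notin> Z"
      proof (cases "y = z")
        case True then show ?thesis using z by auto
      next
        case False
        have yz: "\<bar>y - z\<bar> < e" "y - z \<noteq> 0" using y False by (auto simp: dist_real_def)
        then have "\<bar>y - z\<bar> < r" using e(2) by linarith
        then have "f y = pser c (y - z)" by (rule r(3))
        moreover have "pser c (y - z) \<noteq> 0" using e(3)[OF yz] .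
        ultimately have "f y \<noteq> 0" by simp
        show ?thesis
        proof
          assume "y \<in> Z"
          then obtain e' where "e' > 0" "\<forall>w. \<bar>w - y\<bar> < e' \<longrightarrow> f w = 0" unfolding Z_def by blast
          then have "f y = 0" by simp
          then show False using \<open>f y \<noteq> 0\<close> by simp
        qed
      qed
      ultimately show "y \<in> J - Z" by blast
    qed (use d e in auto)
  qed
  have "Z \<inter> J = {} \<or> (J - Z) \<inter> J = {}"
    by (rule connectedD[OF _ oZ oV]) (unfold J_def, simp, blast, blast)
  moreover have "(J - Z) \<inter> J \<noteq> {}"
  proof -
    obtain x0 where x0: "x0 \<in> J" "f x0 \<noteq> 0" using nz unfolding J_def by blast
    have "x0 \<notin> Z"
    proof
      assume "x0 \<in> Z"
      then obtain e' where "e' > 0" "\<forall>w. \<bar>w - x0\<bar> < e' \<longrightarrow> f w = 0" unfolding Z_def by blast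
      then have "f x0 = 0" by simp
      then show False using x0 by simp
    qed
    then show ?thesis using x0 by blast
  qed
  ultimately have "Z \<inter> J = {}" by blast
  then have "x \<notin> Z" using x unfolding J_def by blast
  then show ?thesis using x unfolding Z_def J_def by blast
qed



lemma ALG_num: "(y::real)\<^sup>2 * (p * h\<^sup>2 * a) * (K * (I * p * a + p * h * b) + (K * (p * h) * b + p * h\<^sup>2 * c))
      = ((p)\<^sup>2 * h\<^sup>2) * (y\<^sup>2 * a * (K * I * a + 2 * K * h * b + h\<^sup>2 * c))"
  by algebra

lemma ALG_den: "((p::real) * h\<^sup>2 * a)\<^sup>2 + y\<^sup>2 * (K * (p * h) * a + p * h\<^sup>2 * b)\<^sup>2
      = ((p)\<^sup>2 * h\<^sup>2) * (h\<^sup>2 * a\<^sup>2 + y\<^sup>2 * (K * a + h * b)\<^sup>2)"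
  by algebra

lemma ALG1: "(y::real)\<^sup>2 * (h * a) * (K * (0 * q * a + 1 * b) + (K * 1 * b + h * c)) / ((h * a)\<^sup>2 + y\<^sup>2 * (K * 1 * a + h * b)\<^sup>2)
  = y\<^sup>2 * a * (K * 0 * a + 2 * K * h * b + h\<^sup>2 * c) / (h\<^sup>2 * a\<^sup>2 + y\<^sup>2 * (K * a + h * b)\<^sup>2)" if "K = 1"
  using that by (simp add: power2_eq_square algebra_simps)

lemma ALG:
  fixes h y a b c :: real
  assumes "k \<ge> 1" "h \<noteq> 0"
  shows "y\<^sup>2 * (h ^ k * a) * (real k * (real (k - 1) * h ^ (k - 2) * a + h ^ (k - 1) * b) + (real k * h ^ (k - 1) * b + h ^ k * c))
           / ((h ^ k * a)\<^sup>2 + y\<^sup>2 * (real k * h ^ (k - 1) * a + h ^ k * b)\<^sup>2)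
       = y\<^sup>2 * a * (real k * real (k - 1) * a + 2 * real k * h * b + h\<^sup>2 * c)
           / (h\<^sup>2 * a\<^sup>2 + y\<^sup>2 * (real k * a + h * b)\<^sup>2)"
proof (cases "k = 1")
  case True
  have e: "h ^ k = h" "h ^ (k - 1) = 1" "h ^ (k - 2) = 1" "real (k - 1) = 0" "real k = 1" using True by auto
  show ?thesis unfolding e by (rule ALG1) simp
next
  case False
  define i where "i = k - 2"
  have k: "k = Suc (Suc i)" using assms(1) False unfolding i_def by simp
  have X: "(h ^ i)\<^sup>2 * h\<^sup>2 \<noteq> 0" using assms(2) by simp
  have hk: "h ^ k = h ^ i * h\<^sup>2" "h ^ (k - 1) = h ^ i * h" "h ^ (k - 2) = h ^ i"
    by (simp_all add: k power2_eq_square)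
  show ?thesis unfolding hk ALG_num ALG_den using X by (rule mult_divide_mult_cancel_left)
qed

lemma HB:
  assumes an: "real_analytic_on f {al<..<be}" and nz: "\<exists>x0\<in>{al<..<be}. f x0 \<noteq> 0"
    and x: "x \<in> {al<..<be}" "x \<noteq> 0"
  shows "\<exists>e>0. \<exists>M. \<forall>y. \<bar>y - x\<bar> < e \<longrightarrow> \<bar>Hq f y\<bar> \<le> M"
proof -
  obtain r c where r: "r > 0" "pconv c r" "\<And>y. \<bar>y - x\<bar> < r \<Longrightarrow> f y = pser c (y - x)"
    using an_local[OF an x(1)] by blast
  have "\<exists>n. c n \<noteq> 0"
  proof (rule ccontr)
    assume "\<not> (\<exists>n. c n \<noteq> 0)"
    then have c0: "c = (\<lambda>n. 0)" by auto
    have "\<forall>y. \<bar>y - x\<bar> < r \<longrightarrow> f y = 0"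
    proof (intro allI impI)
      fix y assume "\<bar>y - x\<bar> < r"
      then have "f y = pser c (y - x)" by (rule r(3))
      then show "f y = 0" by (simp add: c0 pser_def)
    qed
    then show False using ID[OF an nz x(1)] r(1) by blast
  qed
  define k where "k = (LEAST n. c n \<noteq> 0)"
  have ck: "c k \<noteq> 0" unfolding k_def by (rule LeastI_ex[OF \<open>\<exists>n. c n \<noteq> 0\<close>])
  have cl: "c i = 0" if "i < k" for i
    using not_less_Least[of i "\<lambda>n. c n \<noteq> 0"] that unfolding k_def by blast
  define d where "d = (\<lambda>n. c (n + k))"
  have pd: "pconv d r" unfolding d_def by (rule pconv_shift[OF r(2)])
  have pd1: "pconv (diffs d) r" by (rule pconv_diffs[OF pd])
  have pd2: "pconv (diffs (diffs d)) r" by (rule pconv_diffs[OF pd1])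
  define g0 where "g0 = (\<lambda>y. pser d (y - x))"
  define g1 where "g1 = (\<lambda>y. pser (diffs d) (y - x))"
  define g2 where "g2 = (\<lambda>y. pser (diffs (diffs d)) (y - x))"
  have dg0: "(g0 has_real_derivative g1 y) (at y)" if "\<bar>y - x\<bar> < r" for y
    unfolding g0_def g1_def by (rule pser_shift_deriv[OF pd that])
  have dg1: "(g1 has_real_derivative g2 y) (at y)" if "\<bar>y - x\<bar> < r" for y
    unfolding g1_def g2_def by (rule pser_shift_deriv[OF pd1 that])
  have cg0: "isCont g0 x" unfolding g0_def by (rule pser_shift_cont[OF pd]) (simp add: r(1))
  have cg1: "isCont g1 x" unfolding g1_def by (rule pser_shift_cont[OF pd1]) (simp add: r(1))
  have cg2: "isCont g2 x" unfolding g2_def by (rule pser_shift_cont[OF pd2]) (simp add: r(1))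
  have g0x: "g0 x = c k" by (simp add: g0_def d_def pser_def)
  have fe: "f y = (y - x) ^ k * g0 y" if "\<bar>y - x\<bar> < r" for y
    using r(3)[OF that] pser_factor[OF r(2) that cl] unfolding g0_def d_def by simp
  define F1 where "F1 = (\<lambda>y. real k * (y - x) ^ (k - 1) * g0 y + (y - x) ^ k * g1 y)"
  define F2 where "F2 = (\<lambda>y. real k * (real (k - 1) * (y - x) ^ (k - 2) * g0 y + (y - x) ^ (k - 1) * g1 y)
                             + (real k * (y - x) ^ (k - 1) * g1 y + (y - x) ^ k * g2 y))"
  have inb: "y \<in> ball x r \<longleftrightarrow> \<bar>y - x\<bar> < r" for y by (simp add: dist_real_def abs_minus_commute)
  have dF: "(f has_real_derivative F1 y) (at y)" if y: "\<bar>y - x\<bar> < r" for y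
  proof -
    have "((\<lambda>y. (y - x) ^ k * g0 y) has_real_derivative F1 y) (at y)"
      unfolding F1_def by (auto intro!: derivative_eq_intros dg0 y)
    then show ?thesis
      by (rule has_field_derivative_transform_within_open[where S = "ball x r"]) (use y fe inb in auto)
  qed
  have df: "deriv f y = F1 y" if "\<bar>y - x\<bar> < r" for y using dF[OF that] by (rule DERIV_imp_deriv)
  have dF1: "(F1 has_real_derivative F2 y) (at y)" if y: "\<bar>y - x\<bar> < r" for y
    unfolding F1_def F2_def by (auto intro!: derivative_eq_intros dg0 dg1 y simp: algebra_simps numeral_2_eq_2)
  have ddf: "deriv (deriv f) y = F2 y" if y: "\<bar>y - x\<bar> < r" for y
  proof -
    have "(deriv f has_real_derivative F2 y) (at y)"
      by (rule has_field_derivative_transform_within_open[OF dF1[OF y], where S = "ball x r"]) (use y df inb in auto)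
    then show ?thesis by (rule DERIV_imp_deriv)
  qed
  have Hf: "Hq f y = y\<^sup>2 * f y * F2 y / ((f y)\<^sup>2 + y\<^sup>2 * (F1 y)\<^sup>2)" if "\<bar>y - x\<bar> < r" for y
    using that by (simp add: Hq_def df ddf)
  define Q where "Q = (if k = 0 then (\<lambda>y. y\<^sup>2 * g0 y * g2 y / ((g0 y)\<^sup>2 + y\<^sup>2 * (g1 y)\<^sup>2))
     else (\<lambda>y. y\<^sup>2 * g0 y * (real k * real (k - 1) * g0 y + 2 * real k * (y - x) * g1 y + (y - x)\<^sup>2 * g2 y)
           / ((y - x)\<^sup>2 * (g0 y)\<^sup>2 + y\<^sup>2 * (real k * g0 y + (y - x) * g1 y)\<^sup>2)))"
  have QH: "Hq f y = Q y" if y: "\<bar>y - x\<bar> < r" "k = 0 \<or> y \<noteq> x" for y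
  proof (cases "k = 0")
    case True
    then show ?thesis using Hf[OF y(1)] fe[OF y(1)] by (simp add: Q_def F1_def F2_def)
  next
    case False
    then have yx: "y - x \<noteq> 0" using y by auto
    have Qk: "Q = (\<lambda>y. y\<^sup>2 * g0 y * (real k * real (k - 1) * g0 y + 2 * real k * (y - x) * g1 y + (y - x)\<^sup>2 * g2 y)
           / ((y - x)\<^sup>2 * (g0 y)\<^sup>2 + y\<^sup>2 * (real k * g0 y + (y - x) * g1 y)\<^sup>2))" using False by (simp add: Q_def)
    have "Hq f y = y\<^sup>2 * ((y - x) ^ k * g0 y) * F2 y / (((y - x) ^ k * g0 y)\<^sup>2 + y\<^sup>2 * (F1 y)\<^sup>2)"
      using Hf[OF y(1)] fe[OF y(1)] by simp
    also have "\<dots> = Q y" unfolding F1_def F2_def Qk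
      by (rule ALG) (use False yx in auto)
    finally show ?thesis .
  qed
  have Hx: "\<bar>Hq f x\<bar> \<le> \<bar>Q x\<bar>"
  proof (cases "k = 0")
    case True then show ?thesis using QH[of x] r(1) by simp
  next
    case False
    then have "f x = 0" using fe[of x] r(1) by simp
    then show ?thesis by (simp add: Hq_def)
  qed
  have QC: "isCont Q x"
  proof (cases "k = 0")
    case True
    have Qk: "Q = (\<lambda>y. y\<^sup>2 * g0 y * g2 y / ((g0 y)\<^sup>2 + y\<^sup>2 * (g1 y)\<^sup>2))" using True by (simp add: Q_def)
    have "(g0 x)\<^sup>2 + x\<^sup>2 * (g1 x)\<^sup>2 > 0" using g0x ck by (simp add: add_pos_nonneg)
    then show ?thesis unfolding Qk by (intro continuous_intros cg0 cg1 cg2) auto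
  next
    case False
    have Qk: "Q = (\<lambda>y. y\<^sup>2 * g0 y * (real k * real (k - 1) * g0 y + 2 * real k * (y - x) * g1 y + (y - x)\<^sup>2 * g2 y)
           / ((y - x)\<^sup>2 * (g0 y)\<^sup>2 + y\<^sup>2 * (real k * g0 y + (y - x) * g1 y)\<^sup>2))" using False by (simp add: Q_def)
    have "(x - x)\<^sup>2 * (g0 x)\<^sup>2 + x\<^sup>2 * (real k * g0 x + (x - x) * g1 x)\<^sup>2 \<noteq> 0" using g0x ck False x(2) by simp
    then show ?thesis unfolding Qk by (intro continuous_intros cg0 cg1 cg2) auto
  qed
  then have "Q \<midarrow>x\<rightarrow> Q x" by (simp add: isCont_def)
  then obtain s where s: "s > 0" "\<And>y. y \<noteq> x \<Longrightarrow> norm (y - x) < s \<Longrightarrow> norm (Q y - Q x) < 1"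
    using LIM_D[of Q "Q x" x 1] by auto
  show ?thesis
  proof (rule exI[of _ "min r s"], intro conjI exI[of _ "\<bar>Q x\<bar> + 1"] allI impI)
    fix y assume y: "\<bar>y - x\<bar> < min r s"
    show "\<bar>Hq f y\<bar> \<le> \<bar>Q x\<bar> + 1"
    proof (cases "y = x")
      case True then show ?thesis using Hx by simp
    next
      case False
      then have "Hq f y = Q y" using QH[of y] y by simp
      moreover have "\<bar>Q y - Q x\<bar> < 1" using s(2)[of y] False y by simp
      ultimately show ?thesis by simp
    qed
  qed (use r s in auto)
qed



lemma CORE_dir:
  fixes f :: "real \<Rightarrow> real" and \<sigma> :: real
  assumes sg: "\<sigma> = 1 \<or> \<sigma> = -1"
    and reg: "\<And>y. y \<in> {a<..<b} \<Longrightarrow> (f has_real_derivative deriv f y) (at y) \<and> (deriv f has_real_derivative deriv (deriv f) y) (at y)"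
    and hb: "\<And>y. y \<in> {a<..<b} \<Longrightarrow> \<bar>Hq f y\<bar> \<le> L" and L: "0 \<le> L" and a0: "0 < a"
    and x: "x \<in> {a<..<b}" and y: "y \<in> {a<..<b}" and ord: "\<sigma> * ln x \<le> \<sigma> * ln y"
    and fx: "f x \<noteq> 0"
    and sm: "(\<sigma> * ln y - \<sigma> * ln x) * (L + 3/2) < sqrt ((f x)\<^sup>2 / ((f x)\<^sup>2 + x\<^sup>2 * (deriv f x)\<^sup>2)) / 2"
  shows "f y \<noteq> 0 \<and> sqrt ((f x)\<^sup>2 / ((f x)\<^sup>2 + x\<^sup>2 * (deriv f x)\<^sup>2)) / 2 \<le> sqrt ((f y)\<^sup>2 / ((f y)\<^sup>2 + y\<^sup>2 * (deriv f y)\<^sup>2))"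
proof -
  define f1 where "f1 = deriv f"
  define f2 where "f2 = deriv (deriv f)"
  define E where "E = (\<lambda>t. exp (\<sigma> * t))"
  define ph where "ph = (\<lambda>t. f (E t))"
  define ps where "ps = (\<lambda>t. \<sigma> * E t * f1 (E t))"
  define ch where "ch = (\<lambda>t. E t * f1 (E t) + (E t)\<^sup>2 * f2 (E t))"
  define t0 where "t0 = \<sigma> * ln x"
  define t1 where "t1 = \<sigma> * ln y"
  have s2: "\<sigma> * \<sigma> = 1" "\<sigma>\<^sup>2 = 1" using sg by auto
  have x0: "x > 0" and y0: "y > 0" using x y a0 by auto
  have Et0: "E t0 = x" unfolding E_def t0_def using x0 s2 by (simp add: mult.assoc[symmetric])
  have Et1: "E t1 = y" unfolding E_def t1_def using y0 s2 by (simp add: mult.assoc[symmetric])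
  have EI: "E t \<in> {a<..<b}" if t: "t0 \<le> t" "t \<le> t1" for t
  proof (cases "\<sigma> = 1")
    case True
    then have "ln x \<le> t" "t \<le> ln y" using t by (auto simp: t0_def t1_def)
    then have "x \<le> exp t" "exp t \<le> y" using x0 y0 by (metis exp_le_cancel_iff exp_ln)+
    then show ?thesis using x y True by (auto simp: E_def)
  next
    case False
    then have s: "\<sigma> = -1" using sg by auto
    then have "ln y \<le> -t" "-t \<le> ln x" using t by (auto simp: t0_def t1_def)
    then have "y \<le> exp (-t)" "exp (-t) \<le> x" using x0 y0 by (metis exp_le_cancel_iff exp_ln)+
    then show ?thesis using x y s by (auto simp: E_def)
  qed
  have dE: "(E has_real_derivative E t * \<sigma>) (at t)" for t
    unfolding E_def by (auto intro!: derivative_eq_intros)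
  have d1: "(ph has_real_derivative ps t) (at t)" if t: "t0 \<le> t" "t \<le> t1" for t
  proof -
    have "(f has_real_derivative f1 (E t)) (at (E t))" using reg[OF EI[OF t]] by (simp add: f1_def)
    from DERIV_chain2[OF this dE] show ?thesis unfolding ph_def ps_def by (simp add: algebra_simps)
  qed
  have d2: "(ps has_real_derivative ch t) (at t)" if t: "t0 \<le> t" "t \<le> t1" for t
  proof -
    have "(f1 has_real_derivative f2 (E t)) (at (E t))" using reg[OF EI[OF t]] by (simp add: f1_def f2_def)
    from DERIV_chain2[OF this dE] have df1: "((\<lambda>t. f1 (E t)) has_real_derivative f2 (E t) * (E t * \<sigma>)) (at t)" .
    have "((\<lambda>t. \<sigma> * E t * f1 (E t)) has_real_derivative (\<sigma> * (E t * \<sigma>)) * f1 (E t) + (f2 (E t) * (E t * \<sigma>)) * (\<sigma> * E t)) (at t)"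
      using DERIV_mult[OF DERIV_cmult[OF dE, of \<sigma>] df1] by simp
    moreover have "(\<sigma> * (E t * \<sigma>)) * f1 (E t) + (f2 (E t) * (E t * \<sigma>)) * (\<sigma> * E t) = ch t"
    proof -
      have ss: "\<sigma> * (\<sigma> * Z) = Z" for Z using s2(1) by (metis mult.assoc mult_1)
      show ?thesis unfolding ch_def by (simp add: algebra_simps power2_eq_square ss)
    qed
    ultimately show ?thesis unfolding ps_def by simp
  qed
  have Wt: "Wf ph ps t = sqrt ((f (E t))\<^sup>2 / ((f (E t))\<^sup>2 + (E t)\<^sup>2 * (f1 (E t))\<^sup>2))" for t
    unfolding Wf_def ph_def ps_def using s2 by (simp add: power_mult_distrib)
  have hb': "\<bar>ph t * ch t\<bar> \<le> (L + 1/2) * ((ph t)\<^sup>2 + (ps t)\<^sup>2)" if t: "t0 \<le> t" "t \<le> t1" and nz: "ph t \<noteq> 0" for t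
  proof -
    define u where "u = E t"
    have uI: "u \<in> {a<..<b}" using EI[OF t] by (simp add: u_def)
    define P where "P = (f u)\<^sup>2 + u\<^sup>2 * (f1 u)\<^sup>2"
    have fu: "f u \<noteq> 0" using nz by (simp add: ph_def u_def)
    have P: "P > 0" using fu by (simp add: P_def add_pos_nonneg)
    have H: "Hq f u = u\<^sup>2 * f u * f2 u / P" by (simp add: Hq_def P_def f1_def f2_def)
    have "\<bar>u\<^sup>2 * f u * f2 u\<bar> \<le> L * P"
    proof -
      have "u\<^sup>2 * f u * f2 u = Hq f u * P" using P by (simp add: H)
      then show ?thesis using hb[OF uI] P by (simp add: abs_mult mult_right_mono)
    qed
    moreover have "\<bar>u * f u * f1 u\<bar> \<le> P / 2"
    proof -
      have "0 \<le> (\<bar>f u\<bar> - \<bar>u * f1 u\<bar>)\<^sup>2" by simp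
      then show ?thesis unfolding P_def by (simp add: abs_mult power2_eq_square algebra_simps)
    qed
    moreover have "ph t * ch t = u * f u * f1 u + u\<^sup>2 * f u * f2 u" by (simp add: ph_def ch_def u_def algebra_simps)
    moreover have "(ph t)\<^sup>2 + (ps t)\<^sup>2 = P" unfolding P_def ph_def ps_def u_def using s2 by (simp add: power_mult_distrib)
    ultimately show ?thesis by (simp add: algebra_simps)
  qed
  have t01: "t0 \<le> t1" using ord by (simp add: t0_def t1_def)
  have AL': "ph t1 \<noteq> 0 \<and> Wf ph ps t0 / 2 \<le> Wf ph ps t1"
  proof (rule AL[OF t01 _ d1 d2 hb'])
    show "0 \<le> L + 1/2" using L by simp
    show "ph t0 \<noteq> 0" using fx Et0 by (simp add: ph_def)
    show "(t1 - t0) * (1 + (L + 1/2)) < Wf ph ps t0 / 2"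
    proof -
      have e: "Wf ph ps t0 = sqrt ((f x)\<^sup>2 / ((f x)\<^sup>2 + x\<^sup>2 * (deriv f x)\<^sup>2))" by (simp only: Wt Et0 f1_def)
      show ?thesis unfolding e using sm by (simp add: t0_def t1_def algebra_simps)
    qed
  qed auto
  moreover have "Wf ph ps t0 = sqrt ((f x)\<^sup>2 / ((f x)\<^sup>2 + x\<^sup>2 * (deriv f x)\<^sup>2))" by (simp only: Wt Et0 f1_def)
  moreover have "Wf ph ps t1 = sqrt ((f y)\<^sup>2 / ((f y)\<^sup>2 + y\<^sup>2 * (deriv f y)\<^sup>2))" by (simp only: Wt Et1 f1_def)
  moreover have "ph t1 = f y" by (simp only: ph_def Et1)
  ultimately show ?thesis by simp
qed



lemma CORE:
  fixes f :: "real \<Rightarrow> real"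
  assumes reg: "\<And>y. y \<in> {a<..<b} \<Longrightarrow> (f has_real_derivative deriv f y) (at y) \<and> (deriv f has_real_derivative deriv (deriv f) y) (at y)"
    and hb: "\<And>y. y \<in> {a<..<b} \<Longrightarrow> \<bar>Hq f y\<bar> \<le> L" and L: "0 \<le> L" and a0: "0 < a"
    and x: "x \<in> {a<..<b}" and y: "y \<in> {a<..<b}"
    and fx: "f x \<noteq> 0"
    and sm: "\<bar>ln y - ln x\<bar> * (L + 3/2) < sqrt ((f x)\<^sup>2 / ((f x)\<^sup>2 + x\<^sup>2 * (deriv f x)\<^sup>2)) / 2"
  shows "f y \<noteq> 0 \<and> sqrt ((f x)\<^sup>2 / ((f x)\<^sup>2 + x\<^sup>2 * (deriv f x)\<^sup>2)) / 2 \<le> sqrt ((f y)\<^sup>2 / ((f y)\<^sup>2 + y\<^sup>2 * (deriv f y)\<^sup>2))"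
proof (cases "ln x \<le> ln y")
  case True
  show ?thesis
    by (rule CORE_dir[of 1, OF _ reg hb L a0 x y _ fx]) (use True sm in auto)
next
  case False
  show ?thesis
    by (rule CORE_dir[of "-1", OF _ reg hb L a0 x y _ fx]) (use False sm in auto)
qed

lemma KW:
  fixes v x d :: real
  assumes "v \<noteq> 0" "x > 0"
  shows "1 / (1 + x * \<bar>d\<bar> / \<bar>v\<bar>) \<le> sqrt (v\<^sup>2 / (v\<^sup>2 + x\<^sup>2 * d\<^sup>2))"
    and "1 + x * \<bar>d\<bar> / \<bar>v\<bar> \<le> 2 / sqrt (v\<^sup>2 / (v\<^sup>2 + x\<^sup>2 * d\<^sup>2))"
proof -
  define k where "k = x * \<bar>d\<bar> / \<bar>v\<bar>"
  have k0: "k \<ge> 0" using assms by (simp add: k_def)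
  have "v\<^sup>2 / (v\<^sup>2 + x\<^sup>2 * d\<^sup>2) = 1 / (1 + k\<^sup>2)"
    using assms by (simp add: k_def field_simps power2_eq_square abs_mult_self_eq)
  then have we: "sqrt (v\<^sup>2 / (v\<^sup>2 + x\<^sup>2 * d\<^sup>2)) = 1 / sqrt (1 + k\<^sup>2)" by (simp add: real_sqrt_divide)
  define s where "s = sqrt (1 + k\<^sup>2)"
  have s1: "s \<ge> 1" unfolding s_def by simp
  have "s \<le> sqrt ((1 + k)\<^sup>2)" unfolding s_def using k0 by (intro real_sqrt_le_mono) (simp add: power2_eq_square algebra_simps)
  then have s2: "s \<le> 1 + k" using k0 by simp
  have "(1 + k)\<^sup>2 \<le> 4 * (1 + k\<^sup>2)"
  proof -
    have "0 \<le> (k - 1)\<^sup>2" by simp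
    then have "(1 + k)\<^sup>2 \<le> 2 * (1 + k\<^sup>2)" by (simp add: power2_eq_square algebra_simps)
    moreover have "2 * (1 + k\<^sup>2) \<le> 4 * (1 + k\<^sup>2)" by simp
    ultimately show ?thesis by linarith
  qed
  then have "sqrt ((1 + k)\<^sup>2) \<le> sqrt (4 * (1 + k\<^sup>2))" by (rule real_sqrt_le_mono)
  moreover have "sqrt (4 * (1 + k\<^sup>2)) = 2 * s" unfolding s_def real_sqrt_mult by simp
  ultimately have s3: "1 + k \<le> 2 * s" using k0 by simp
  show "1 / (1 + k) \<le> sqrt (v\<^sup>2 / (v\<^sup>2 + x\<^sup>2 * d\<^sup>2))" unfolding we s_def[symmetric]
    using s1 s2 k0 by (simp add: frac_le)
  show "1 + k \<le> 2 / sqrt (v\<^sup>2 / (v\<^sup>2 + x\<^sup>2 * d\<^sup>2))" unfolding we s_def[symmetric]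
    using s1 s3 by simp
qed

lemma RD:
  assumes "x > 0" "rdist y x < ereal r"
  shows "y > 0 \<and> \<bar>ln y - ln x\<bar> < r"
proof -
  have "y * x > 0"
  proof (rule ccontr)
    assume "\<not> y * x > 0"
    then have "rdist y x = \<infinity>" using assms(1) by (auto simp: rdist_def)
    then show False using assms(2) by simp
  qed
  then have y: "y > 0" using assms(1) by (simp add: zero_less_mult_iff)
  then have "rdist y x = ereal \<bar>ln (x / y)\<bar>" using assms(1) by (simp add: rdist_def)
  then have "\<bar>ln (x / y)\<bar> < r" using assms(2) by simp
  moreover have "ln (x / y) = ln x - ln y" using y assms(1) by (simp add: ln_div)
  ultimately show ?thesis using y by simp
qed

lemma MAIN:
  fixes f :: "real \<Rightarrow> real"
  assumes a0: "0 < a" and ab: "a < b"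
    and reg: "\<And>y. y \<in> {a<..<b} \<Longrightarrow> (f has_real_derivative deriv f y) (at y) \<and> (deriv f has_real_derivative deriv (deriv f) y) (at y)"
    and hb: "\<And>y. y \<in> {a<..<b} \<Longrightarrow> \<bar>Hq f y\<bar> \<le> L" and L: "0 \<le> L"
    and kl: "(kappa f \<longlongrightarrow> \<infinity>) (at_right a)" and kr: "(kappa f \<longlongrightarrow> \<infinity>) (at_left b)"
  shows "amenable f {a<..<b}"
  unfolding amenable_def
proof (rule exI[of _ "2 * L + 7"], intro conjI ballI impI)
  define C where "C = 2 * L + 7"
  show "0 < 2 * L + 7" using L by simp
  fix x assume xI: "x \<in> {a<..<b}" and kx: "kappa f x < \<infinity>"
  have x0: "x > 0" using xI a0 by simp
  have fx: "f x \<noteq> 0" using kx x0 by (auto simp: kappa_def)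
  define k where "k = x * \<bar>deriv f x\<bar> / \<bar>f x\<bar>"
  define m where "m = 1 + k"
  have k0: "k \<ge> 0" using x0 by (simp add: k_def)
  have m1: "m \<ge> 1" using k0 by (simp add: m_def)
  have mx: "mu f x = ereal m" using x0 fx by (simp add: mu_def kappa_def k_def m_def)
  have rm: "real_of_ereal (mu f x) = m" by (simp add: mx)
  define w where "w = (\<lambda>y. sqrt ((f y)\<^sup>2 / ((f y)\<^sup>2 + y\<^sup>2 * (deriv f y)\<^sup>2)))"
  have wx: "1 / m \<le> w x" using KW(1)[OF fx x0, of "deriv f x"] by (simp add: w_def m_def k_def)
  define \<rho> where "\<rho> = 1 / (C * m)"
  have C: "C \<ge> 4" "C \<ge> 2 * (L + 3/2)" using L by (auto simp: C_def)
  have KEY: "f s \<noteq> 0 \<and> 1 + s * \<bar>deriv f s\<bar> / \<bar>f s\<bar> \<le> 4 * m" if sI: "s \<in> {a<..<b}" and sd: "\<bar>ln s - ln x\<bar> < \<rho>" for s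
  proof -
    have "\<bar>ln s - ln x\<bar> * (L + 3/2) < \<rho> * (L + 3/2)" using sd L by (intro mult_strict_right_mono) auto
    also have "\<rho> * (L + 3/2) \<le> 1 / (2 * m)"
    proof -
      have "2 * (L + 3/2) * (2 * m) \<le> C * (2 * m)" using C(2) m1 by (intro mult_right_mono) auto
      then show ?thesis unfolding \<rho>_def using C m1 by (simp add: field_simps)
    qed
    also have "1 / (2 * m) \<le> w x / 2" using wx by simp
    finally have sm: "\<bar>ln s - ln x\<bar> * (L + 3/2) < w x / 2" .
    have cr: "f s \<noteq> 0 \<and> w x / 2 \<le> w s"
      using CORE[OF reg hb L a0 xI sI fx] sm unfolding w_def by blast
    have s0: "s > 0" using sI a0 by simp
    have ws: "1 / (2 * m) \<le> w s" using cr wx by simp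
    have wpos: "w s > 0" using ws m1 by (smt (verit) divide_pos_pos)
    have "1 + s * \<bar>deriv f s\<bar> / \<bar>f s\<bar> \<le> 2 / w s"
      using KW(2)[of "f s" s "deriv f s"] cr s0 by (simp add: w_def)
    also have "2 / w s \<le> 4 * m"
      using ws wpos m1 by (simp add: field_simps)
    finally show ?thesis using cr by simp
  qed
  have kap: "kappa f s = ereal (s * \<bar>deriv f s\<bar> / \<bar>f s\<bar>)" if "s > 0" "f s \<noteq> 0" for s
    using that by (simp add: kappa_def)
  let ?B = "{y. rdist y x < ereal (1 / ((2 * L + 7) * real_of_ereal (mu f x)))}"
  have Bchar: "y > 0 \<and> \<bar>ln y - ln x\<bar> < \<rho>" if "y \<in> ?B" for y
    using RD[OF x0, of y \<rho>] that by (simp add: rm \<rho>_def C_def)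
  have BI: "?B \<subseteq> {a<..<b}"
  proof
    fix y assume yB: "y \<in> ?B"
    from Bchar[OF yB] have y0: "y > 0" and yd: "\<bar>ln y - ln x\<bar> < \<rho>" by auto
    show "y \<in> {a<..<b}"
    proof (rule ccontr)
      assume "y \<notin> {a<..<b}"
      then consider "y \<le> a" | "y \<ge> b" by force
      then show False
      proof cases
        case 1
        have "eventually (\<lambda>s. ereal (4 * m) < kappa f s) (at_right a)"
          using order_tendstoD(1)[OF kl, of "ereal (4 * m)"] by simp
        then obtain d where d: "d > a" "\<And>s. s > a \<Longrightarrow> s < d \<Longrightarrow> ereal (4 * m) < kappa f s"
          unfolding eventually_at_right_field by blast
        define s where "s = (a + min d x) / 2"
        have s: "a < s" "s < d" "s < x" using d xI by (auto simp: s_def)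
        have sI: "s \<in> {a<..<b}" using s xI by auto
        have "ln y < ln s" using y0 s 1 by simp
        moreover have "ln s < ln x" using s a0 by simp
        ultimately have "\<bar>ln s - ln x\<bar> < \<rho>" using yd by simp
        from KEY[OF sI this] have "f s \<noteq> 0" "1 + s * \<bar>deriv f s\<bar> / \<bar>f s\<bar> \<le> 4 * m" by auto
        moreover have "ereal (4 * m) < kappa f s" using d(2) s by simp
        ultimately show False using kap[of s] s a0 by simp
      next
        case 2
        have "eventually (\<lambda>s. ereal (4 * m) < kappa f s) (at_left b)"
          using order_tendstoD(1)[OF kr, of "ereal (4 * m)"] by simp
        then obtain d where d: "d < b" "\<And>s. s > d \<Longrightarrow> s < b \<Longrightarrow> ereal (4 * m) < kappa f s"
          unfolding eventually_at_left_field by blast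
        define s where "s = (max d x + b) / 2"
        have s: "s < b" "d < s" "x < s" using d xI by (auto simp: s_def)
        have sI: "s \<in> {a<..<b}" using s xI by auto
        have "ln s < ln y" using s x0 2 by simp
        moreover have "ln x < ln s" using s x0 by simp
        ultimately have "\<bar>ln s - ln x\<bar> < \<rho>" using yd by simp
        from KEY[OF sI this] have "f s \<noteq> 0" "1 + s * \<bar>deriv f s\<bar> / \<bar>f s\<bar> \<le> 4 * m" by auto
        moreover have "ereal (4 * m) < kappa f s" using d(2) s by simp
        ultimately show False using kap[of s] s x0 by simp
      qed
    qed
  qed
  show "let B = ?B in B \<subseteq> {a<..<b} \<and> (\<forall>y\<in>B. mu f y \<le> ereal (2 * L + 7) * mu f x)"
    unfolding Let_def
  proof (intro conjI ballI BI)
    fix y assume yB: "y \<in> ?B"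
    have yI: "y \<in> {a<..<b}" using BI yB by blast
    from Bchar[OF yB] have y0: "y > 0" and yd: "\<bar>ln y - ln x\<bar> < \<rho>" by auto
    from KEY[OF yI yd] have fy: "f y \<noteq> 0" and kb: "1 + y * \<bar>deriv f y\<bar> / \<bar>f y\<bar> \<le> 4 * m" by auto
    have "mu f y = ereal (1 + y * \<bar>deriv f y\<bar> / \<bar>f y\<bar>)" using y0 fy by (simp add: mu_def kappa_def)
    moreover have "4 * m \<le> C * m" using C m1 by (intro mult_right_mono) auto
    ultimately show "mu f y \<le> ereal (2 * L + 7) * mu f x" using kb by (simp add: mx C_def)
  qed
qed



lemma GHB:
  fixes f :: "real \<Rightarrow> real"
  assumes a0: "0 < a" and ab: "a < b"
    and an: "real_analytic_on f {a<..<b}" and nz: "\<exists>x\<in>{a<..<b}. f x \<noteq> 0"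
    and C: "C > 0"
    and la: "Limsup (at_right a) (\<lambda>x. ereal \<bar>Hq f x\<bar>) \<le> ereal C"
    and lb: "Limsup (at_left b) (\<lambda>x. ereal \<bar>Hq f x\<bar>) \<le> ereal C"
  shows "\<exists>L\<ge>0. \<forall>y\<in>{a<..<b}. \<bar>Hq f y\<bar> \<le> L"
proof -
  have "eventually (\<lambda>x. ereal \<bar>Hq f x\<bar> < ereal (C + 1)) (at_right a)"
    by (rule Limsup_lessD) (use la in \<open>simp add: order.strict_trans1\<close>)
  then obtain d1 where d1: "d1 > a" "\<And>s. s > a \<Longrightarrow> s < d1 \<Longrightarrow> \<bar>Hq f s\<bar> < C + 1"
    unfolding eventually_at_right_field by auto
  have "eventually (\<lambda>x. ereal \<bar>Hq f x\<bar> < ereal (C + 1)) (at_left b)"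
    by (rule Limsup_lessD) (use lb in \<open>simp add: order.strict_trans1\<close>)
  then obtain d2 where d2: "d2 < b" "\<And>s. s > d2 \<Longrightarrow> s < b \<Longrightarrow> \<bar>Hq f s\<bar> < C + 1"
    unfolding eventually_at_left_field by auto
  define K where "K = {d1..d2}"
  have KI: "z \<in> {a<..<b}" "z \<noteq> 0" if "z \<in> K" for z using that d1 d2 a0 by (auto simp: K_def)
  have "\<forall>z\<in>K. \<exists>e. e > 0 \<and> (\<exists>M. \<forall>y. \<bar>y - z\<bar> < e \<longrightarrow> \<bar>Hq f y\<bar> \<le> M)"
    using HB[OF an nz KI] by blast
  then obtain ef where ef: "\<And>z. z \<in> K \<Longrightarrow> ef z > 0 \<and> (\<exists>M. \<forall>y. \<bar>y - z\<bar> < ef z \<longrightarrow> \<bar>Hq f y\<bar> \<le> M)"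
    by metis
  then obtain Mf where Mf: "\<And>z. z \<in> K \<Longrightarrow> ef z > 0 \<and> (\<forall>y. \<bar>y - z\<bar> < ef z \<longrightarrow> \<bar>Hq f y\<bar> \<le> Mf z)"
    by metis
  have "compact K" by (simp add: K_def)
  moreover have "\<And>z. z \<in> K \<Longrightarrow> open (ball z (ef z))" by simp
  moreover have "K \<subseteq> (\<Union>z\<in>K. ball z (ef z))" using Mf by force
  ultimately obtain D where D: "D \<subseteq> K" "finite D" "K \<subseteq> (\<Union>z\<in>D. ball z (ef z))"
    by (rule compactE_image)
  define L where "L = C + 1 + (\<Sum>z\<in>D. \<bar>Mf z\<bar>)"
  have L0: "L \<ge> 0" using C by (simp add: L_def sum_nonneg)
  have "\<bar>Hq f y\<bar> \<le> L" if yI: "y \<in> {a<..<b}" for y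
  proof -
    have S0: "(\<Sum>z\<in>D. \<bar>Mf z\<bar>) \<ge> 0" by (simp add: sum_nonneg)
    consider "y < d1" | "y > d2" | "y \<in> K" by (force simp: K_def)
    then show ?thesis
    proof cases
      case 1
      then have "\<bar>Hq f y\<bar> < C + 1" using d1(2)[of y] yI by simp
      then show ?thesis using S0 unfolding L_def by linarith
    next
      case 2
      then have "\<bar>Hq f y\<bar> < C + 1" using d2(2)[of y] yI by simp
      then show ?thesis using S0 unfolding L_def by linarith
    next
      case 3
      then obtain z where z: "z \<in> D" "y \<in> ball z (ef z)" using D(3) by blast
      then have "\<bar>y - z\<bar> < ef z" by (simp add: dist_real_def abs_minus_commute)
      then have "\<bar>Hq f y\<bar> \<le> Mf z" using Mf[of z] z D(1) by blast
      also have "\<dots> \<le> \<bar>Mf z\<bar>" by simp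
      also have "\<dots> \<le> (\<Sum>z\<in>D. \<bar>Mf z\<bar>)" by (rule member_le_sum) (use z D in auto)
      finally show ?thesis using C by (simp add: L_def)
    qed
  qed
  then show ?thesis using L0 by blast
qed

lemma HQEQ:
  fixes f g :: "real \<Rightarrow> real"
  assumes "open S" "\<And>y. y \<in> S \<Longrightarrow> f y = g y" "y \<in> S"
  shows "Hq f y = Hq g y"
proof -
  have d1: "deriv f z = deriv g z" if "z \<in> S" for z
    by (rule deriv_cong_ev) (use assms that in \<open>auto simp: eventually_nhds\<close>)
  have d2: "deriv (deriv f) y = deriv (deriv g) y"
    by (rule deriv_cong_ev) (use assms d1 in \<open>auto simp: eventually_nhds\<close>)
  show ?thesis unfolding Hq_def using d1[OF assms(3)] d2 assms(2,3) by simp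
qed

lemma EXT1:
  fixes f g :: "real \<Rightarrow> real"
  assumes a0: "0 < a" and ab: "a < b" and nz: "\<exists>x\<in>{a<..<b}. f x \<noteq> 0"
    and e: "\<epsilon> > 0" and ang: "real_analytic_on g {a - \<epsilon><..<b}" and eq: "\<forall>x\<in>{a<..<b}. g x = f x"
  shows "\<exists>C>0. Limsup (at_right a) (\<lambda>x. ereal \<bar>Hq f x\<bar>) \<le> ereal C"
proof -
  have nzg: "\<exists>x\<in>{a - \<epsilon><..<b}. g x \<noteq> 0" using nz eq e by force
  have aJ: "a \<in> {a - \<epsilon><..<b}" using e ab by simp
  obtain r M where r: "r > 0" "\<And>y. \<bar>y - a\<bar> < r \<Longrightarrow> \<bar>Hq g y\<bar> \<le> M"
    using HB[OF ang nzg aJ] a0 by auto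
  have "eventually (\<lambda>x. ereal \<bar>Hq f x\<bar> \<le> ereal (max M 1)) (at_right a)"
    unfolding eventually_at_right_field
  proof (intro exI[of _ "min (a + r) b"] conjI allI impI)
    show "a < min (a + r) b" using r ab by simp
    fix y assume y: "a < y" "y < min (a + r) b"
    have yI: "y \<in> {a<..<b}" using y by simp
    have "Hq f y = Hq g y" by (rule HQEQ[of "{a<..<b}"]) (use eq yI in auto)
    then show "ereal \<bar>Hq f y\<bar> \<le> ereal (max M 1)" unfolding ereal_less_eq(3) using r(2)[of y] y by auto
  qed
  then have "Limsup (at_right a) (\<lambda>x. ereal \<bar>Hq f x\<bar>) \<le> ereal (max M 1)" by (rule Limsup_bounded)
  then show ?thesis by (intro exI[of _ "max M 1"]) auto
qed

lemma EXT2: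
  fixes f g :: "real \<Rightarrow> real"
  assumes a0: "0 < a" and ab: "a < b" and nz: "\<exists>x\<in>{a<..<b}. f x \<noteq> 0"
    and e: "\<epsilon> > 0" and ang: "real_analytic_on g {a<..<b + \<epsilon>}" and eq: "\<forall>x\<in>{a<..<b}. g x = f x"
  shows "\<exists>C>0. Limsup (at_left b) (\<lambda>x. ereal \<bar>Hq f x\<bar>) \<le> ereal C"
proof -
  have nzg: "\<exists>x\<in>{a<..<b + \<epsilon>}. g x \<noteq> 0" using nz eq e by force
  have bJ: "b \<in> {a<..<b + \<epsilon>}" using e ab by simp
  obtain r M where r: "r > 0" "\<And>y. \<bar>y - b\<bar> < r \<Longrightarrow> \<bar>Hq g y\<bar> \<le> M"
    using HB[OF ang nzg bJ] a0 ab by auto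
  have "eventually (\<lambda>x. ereal \<bar>Hq f x\<bar> \<le> ereal (max M 1)) (at_left b)"
    unfolding eventually_at_left_field
  proof (intro exI[of _ "max (b - r) a"] conjI allI impI)
    show "max (b - r) a < b" using r ab by simp
    fix y assume y: "max (b - r) a < y" "y < b"
    have yI: "y \<in> {a<..<b}" using y by simp
    have "Hq f y = Hq g y" by (rule HQEQ[of "{a<..<b}"]) (use eq yI in auto)
    then show "ereal \<bar>Hq f y\<bar> \<le> ereal (max M 1)" unfolding ereal_less_eq(3) using r(2)[of y] y by auto
  qed
  then have "Limsup (at_left b) (\<lambda>x. ereal \<bar>Hq f x\<bar>) \<le> ereal (max M 1)" by (rule Limsup_bounded)
  then show ?thesis by (intro exI[of _ "max M 1"]) auto
qed

theorem proposition1: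
  fixes f :: "real \<Rightarrow> real" and a b :: real
  assumes ab: "0 < a" "a < b"
    and an: "real_analytic_on f {a<..<b}"
    and nz: "\<exists>x\<in>{a<..<b}. f x \<noteq> 0"
  shows
    "((kappa f \<longlongrightarrow> \<infinity>) (at_right a) \<and> (kappa f \<longlongrightarrow> \<infinity>) (at_left b) \<and>
      (\<exists>C>0. Limsup (at_right a) (\<lambda>x. ereal \<bar>Hq f x\<bar>) \<le> ereal C \<and>
              Limsup (at_left b) (\<lambda>x. ereal \<bar>Hq f x\<bar>) \<le> ereal C)
      \<longrightarrow> amenable f {a<..<b})
     \<and> ((\<exists>\<epsilon>>0. \<exists>g. real_analytic_on g {a - \<epsilon><..<b} \<and> (\<forall>x\<in>{a<..<b}. g x = f x))
         \<longrightarrow> (\<exists>C>0. Limsup (at_right a) (\<lambda>x. ereal \<bar>Hq f x\<bar>) \<le> ereal C))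
     \<and> ((\<exists>\<epsilon>>0. \<exists>g. real_analytic_on g {a<..<b + \<epsilon>} \<and> (\<forall>x\<in>{a<..<b}. g x = f x))
         \<longrightarrow> (\<exists>C>0. Limsup (at_left b) (\<lambda>x. ereal \<bar>Hq f x\<bar>) \<le> ereal C))"
proof (intro conjI impI)
  have reg: "\<And>y. y \<in> {a<..<b} \<Longrightarrow> (f has_real_derivative deriv f y) (at y) \<and> (deriv f has_real_derivative deriv (deriv f) y) (at y)"
    using REG[OF an] by blast
  assume H: "(kappa f \<longlongrightarrow> \<infinity>) (at_right a) \<and> (kappa f \<longlongrightarrow> \<infinity>) (at_left b) \<and>
      (\<exists>C>0. Limsup (at_right a) (\<lambda>x. ereal \<bar>Hq f x\<bar>) \<le> ereal C \<and>
              Limsup (at_left b) (\<lambda>x. ereal \<bar>Hq f x\<bar>) \<le> ereal C)"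
  then obtain C where C: "C > 0" "Limsup (at_right a) (\<lambda>x. ereal \<bar>Hq f x\<bar>) \<le> ereal C"
      "Limsup (at_left b) (\<lambda>x. ereal \<bar>Hq f x\<bar>) \<le> ereal C" by blast
  obtain L where L: "L \<ge> 0" "\<And>y. y \<in> {a<..<b} \<Longrightarrow> \<bar>Hq f y\<bar> \<le> L"
    using GHB[OF ab an nz C] by blast
  show "amenable f {a<..<b}"
    by (rule MAIN[OF ab reg L(2) L(1)]) (use H in auto)
next
  assume "\<exists>\<epsilon>>0. \<exists>g. real_analytic_on g {a - \<epsilon><..<b} \<and> (\<forall>x\<in>{a<..<b}. g x = f x)"
  then obtain \<epsilon> g where "\<epsilon> > 0" "real_analytic_on g {a - \<epsilon><..<b}" "\<forall>x\<in>{a<..<b}. g x = f x" by blast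
  then show "\<exists>C>0. Limsup (at_right a) (\<lambda>x. ereal \<bar>Hq f x\<bar>) \<le> ereal C"
    by (rule EXT1[OF ab nz])
next
  assume "\<exists>\<epsilon>>0. \<exists>g. real_analytic_on g {a<..<b + \<epsilon>} \<and> (\<forall>x\<in>{a<..<b}. g x = f x)"
  then obtain \<epsilon> g where "\<epsilon> > 0" "real_analytic_on g {a<..<b + \<epsilon>}" "\<forall>x\<in>{a<..<b}. g x = f x" by blast
  then show "\<exists>C>0. Limsup (at_left b) (\<lambda>x. ereal \<bar>Hq f x\<bar>) \<le> ereal C"
    by (rule EXT2[OF ab nz])
qed

end
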